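(* Let $X$ be a finite set, $R>1$, $p\in(0,1]$, let $\pi$ be an $R$-spread probability measure on subsets of $X$, and set $\delta=(pR)^{-1/3}$. Let $\mathbb{P}_p$ be the planted model: $\mathbf{A}\sim\pi$, independently $\mathbf{V}\sim\mathbb{Q}_p$, and $\mathbf{Y}=\mathbf{A}\cup\mathbf{V}$. If \[ \mathbb{E}_{\mathbb{P}_p}\big(\mathcal{Z}_{\mathbf{Y}}(\mathbf{A},\delta)\big)\le 6\delta^2, \] then \[ \mathbb{E}_{\mathbb{P}_p}\bigg(\frac{\mathcal{Z}_{\mathbf{Y}}(\mathbf{A},\delta)}{\mathcal{Z}_{\mathbf{Y}}}\bigg)\le 6\delta . \]
   Context: A probability measure $\pi$ on subsets of $X$ is $R$-spread if for every $S\subseteq X$, $\pi(S\subseteq\mathbf{A})\le R^{-|S|}$ for $\mathbf{A}\sim\pi$. $\mathbb{Q}_p$ is the law of the random subset of $X$ containing each element independently with probability $p$. For $Y\subseteq X$ define $\mathcal{Z}_{Y}=\sum_{A'\subseteq X}\pi(A')\,\mathbf{1}\{A'\subseteq Y\}\,p^{-|A'|}$, and for $A\subseteq X$ define $\mathcal{Z}_{Y}(A,\delta)=\sum_{A'\subseteq X:\,|A\cap A'|>\delta|A|}\pi(A')\,\mathbf{1}\{A'\subseteq Y\}\,p^{-|A'|}$. *)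

theory Defs
  imports Complex_Main
begin

definition prob_on_subsets :: "'a set \<Rightarrow> ('a set \<Rightarrow> real) \<Rightarrow> bool" where
  "prob_on_subsets X \<pi> \<longleftrightarrow> (\<forall>A. 0 \<le> \<pi> A) \<and> (\<forall>A. \<not> A \<subseteq> X \<longrightarrow> \<pi> A = 0)
     \<and> (\<Sum>A\<in>Pow X. \<pi> A) = 1"

definition spread :: "'a set \<Rightarrow> real \<Rightarrow> ('a set \<Rightarrow> real) \<Rightarrow> bool" where
  "spread X R \<pi> \<longleftrightarrow> (\<forall>S. S \<subseteq> X \<longrightarrow> (\<Sum>A\<in>{A\<in>Pow X. S \<subseteq> A}. \<pi> A) \<le> R powr (- real (card S)))"

definition Qp :: "'a set \<Rightarrow> real \<Rightarrow> 'a set \<Rightarrow> real" where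
  "Qp X p V = (if V \<subseteq> X then p ^ card V * (1 - p) ^ (card X - card V) else 0)"

definition Z :: "'a set \<Rightarrow> ('a set \<Rightarrow> real) \<Rightarrow> real \<Rightarrow> 'a set \<Rightarrow> real" where
  "Z X \<pi> p Y = (\<Sum>A'\<in>Pow X. \<pi> A' * (if A' \<subseteq> Y then 1 else 0) * p powr (- real (card A')))"

definition Zdelta :: "'a set \<Rightarrow> ('a set \<Rightarrow> real) \<Rightarrow> real \<Rightarrow> 'a set \<Rightarrow> 'a set \<Rightarrow> real \<Rightarrow> real" where
  "Zdelta X \<pi> p Y A \<delta> = (\<Sum>A'\<in>{A'\<in>Pow X. real (card (A \<inter> A')) > \<delta> * real (card A)}.
      \<pi> A' * (if A' \<subseteq> Y then 1 else 0) * p powr (- real (card A')))"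

definition planted_exp :: "'a set \<Rightarrow> ('a set \<Rightarrow> real) \<Rightarrow> real \<Rightarrow> ('a set \<Rightarrow> 'a set \<Rightarrow> real) \<Rightarrow> real" where
  "planted_exp X \<pi> p f = (\<Sum>A\<in>Pow X. \<Sum>V\<in>Pow X. \<pi> A * Qp X p V * f A (A \<union> V))"

end

theory Submission imports Defs begin
lemma binom_subsets:
  fixes p :: real
  assumes "finite A"
  shows "(\<Sum>B\<in>Pow A. p ^ card B * (1 - p) ^ (card A - card B)) = 1"
  using assms
proof (induction A rule: finite_induct)
  case empty then show ?case by simp
next
  case (insert x F)
  have fin: "finite (Pow F)" using insert by simp
  have dis: "Pow F \<inter> insert x ` Pow F = {}" using insert by auto
  have inj: "inj_on (insert x) (Pow F)" unfolding inj_on_def using insert by (metis PowD insert_ident subsetD)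
  have "(\<Sum>B\<in>Pow (insert x F). p ^ card B * (1 - p) ^ (card (insert x F) - card B))
     = (\<Sum>B\<in>Pow F. p ^ card B * (1 - p) ^ (card (insert x F) - card B))
     + (\<Sum>B\<in>insert x ` Pow F. p ^ card B * (1 - p) ^ (card (insert x F) - card B))"
    unfolding Pow_insert by (rule sum.union_disjoint) (use fin dis in auto)
  also have "(\<Sum>B\<in>insert x ` Pow F. p ^ card B * (1 - p) ^ (card (insert x F) - card B))
     = (\<Sum>B\<in>Pow F. p ^ card (insert x B) * (1 - p) ^ (card (insert x F) - card (insert x B)))"
    by (rule sum.reindex_cong[OF inj]) auto
  also have "\<dots> = (\<Sum>B\<in>Pow F. p * (p ^ card B * (1 - p) ^ (card F - card B)))"
  proof (rule sum.cong)
    fix B assume "B \<in> Pow F"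
    then have "finite B" "x \<notin> B" using insert finite_subset by auto
    then show "p ^ card (insert x B) * (1 - p) ^ (card (insert x F) - card (insert x B)) = p * (p ^ card B * (1 - p) ^ (card F - card B))"
      using insert by simp
  qed simp
  also have "(\<Sum>B\<in>Pow F. p ^ card B * (1 - p) ^ (card (insert x F) - card B))
     = (\<Sum>B\<in>Pow F. (1 - p) * (p ^ card B * (1 - p) ^ (card F - card B)))"
  proof (rule sum.cong)
    fix B assume "B \<in> Pow F"
    then have "card B \<le> card F" using insert card_mono by auto
    then have "card (insert x F) - card B = Suc (card F - card B)" using insert by simp
    then show "p ^ card B * (1 - p) ^ (card (insert x F) - card B) = (1 - p) * (p ^ card B * (1 - p) ^ (card F - card B))"
      by simp
  qed simp
  finally show ?case by (simp only: sum_distrib_left[symmetric] insert.IH) simp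
qed

lemma planted_id:
  fixes p :: real
  assumes "finite X" "A \<subseteq> X" "0 < p"
  shows "(\<Sum>V\<in>Pow X. Qp X p V * h (A \<union> V))
    = (\<Sum>y\<in>Pow X. (if A \<subseteq> y then 1 else 0) * (Qp X p y * p powr (- real (card A))) * h y)"
proof -
  have "(\<Sum>V\<in>Pow X. Qp X p V * h (A \<union> V)) = (\<Sum>V\<in>Pow X. \<Sum>y\<in>Pow X. (if A \<union> V = y then Qp X p V * h y else 0))"
    by (rule sum.cong) (use assms in \<open>auto simp: sum.delta\<close>)
  also have "\<dots> = (\<Sum>y\<in>Pow X. \<Sum>V\<in>Pow X. (if A \<union> V = y then Qp X p V * h y else 0))"
    by (rule sum.swap)
  also have "\<dots> = (\<Sum>y\<in>Pow X. (if A \<subseteq> y then 1 else 0) * (Qp X p y * p powr (- real (card A))) * h y)"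
  proof (rule sum.cong)
    fix y assume y: "y \<in> Pow X"
    have e: "(\<Sum>V\<in>Pow X. (if A \<union> V = y then Qp X p V * h y else 0)) = (\<Sum>V\<in>{V\<in>Pow X. A \<union> V = y}. Qp X p V) * h y"
      by (simp add: sum.inter_filter[symmetric] sum_distrib_right assms)
    show "(\<Sum>V\<in>Pow X. (if A \<union> V = y then Qp X p V * h y else 0)) = (if A \<subseteq> y then 1 else 0) * (Qp X p y * p powr (- real (card A))) * h y"
    proof (cases "A \<subseteq> y")
      case False
      then have "{V\<in>Pow X. A \<union> V = y} = {}" by auto
      then show ?thesis using e False by simp
    next
      case True
      have fy: "finite y" "finite A" using y assms finite_subset by auto
      have set: "{V\<in>Pow X. A \<union> V = y} = (\<lambda>B. (y - A) \<union> B) ` Pow A"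
        using True y assms by auto
      have inj: "inj_on (\<lambda>B. (y - A) \<union> B) (Pow A)" unfolding inj_on_def by blast
      have cA: "card A \<le> card y" using True fy card_mono by auto
      have cy: "card y \<le> card X" using y assms card_mono by auto
      have "(\<Sum>V\<in>{V\<in>Pow X. A \<union> V = y}. Qp X p V) = (\<Sum>B\<in>Pow A. Qp X p ((y - A) \<union> B))"
        unfolding set by (rule sum.reindex[OF inj, unfolded comp_def])
      also have "\<dots> = (\<Sum>B\<in>Pow A. (p ^ (card y - card A) * (1 - p) ^ (card X - card y)) * (p ^ card B * (1 - p) ^ (card A - card B)))"
      proof (rule sum.cong)
        fix B assume B: "B \<in> Pow A"
        have fB: "finite B" using B fy finite_subset by auto
        have cB: "card B \<le> card A" using B fy card_mono by auto
        have c: "card ((y - A) \<union> B) = card y - card A + card B"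
        proof -
          have "card ((y - A) \<union> B) = card (y - A) + card B"
            using fy fB B by (intro card_Un_disjoint) auto
          moreover have "card (y - A) = card y - card A" using fy True by (simp add: card_Diff_subset)
          ultimately show ?thesis by simp
        qed
        have sub: "(y - A) \<union> B \<subseteq> X" using B y assms by auto
        have "card X - (card y - card A + card B) = (card X - card y) + (card A - card B)"
          using cA cB cy by simp
        then show "Qp X p ((y - A) \<union> B) = (p ^ (card y - card A) * (1 - p) ^ (card X - card y)) * (p ^ card B * (1 - p) ^ (card A - card B))"
          unfolding Qp_def using sub c by (simp add: power_add)
      qed simp
      also have "\<dots> = p ^ (card y - card A) * (1 - p) ^ (card X - card y)"
        by (simp add: sum_distrib_left[symmetric] binom_subsets fy)
      also have "\<dots> = Qp X p y * p powr (- real (card A))"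
        using y cA assms by (simp add: Qp_def power_diff powr_minus powr_realpow divide_inverse)
      finally show ?thesis using e True by simp
    qed
  qed simp
  finally show ?thesis .
qed
lemma Zdelta_le_Z:
  assumes "finite X" "prob_on_subsets X \<pi>" "0 < p"
  shows "0 \<le> Zdelta X \<pi> p Y A d" "Zdelta X \<pi> p Y A d \<le> Z X \<pi> p Y"
proof -
  have nn: "\<And>A'. 0 \<le> \<pi> A' * (if A' \<subseteq> Y then 1 else 0) * p powr (- real (card A'))"
    using assms unfolding prob_on_subsets_def by simp
  show "0 \<le> Zdelta X \<pi> p Y A d" unfolding Zdelta_def by (rule sum_nonneg) (use nn in auto)
  show "Zdelta X \<pi> p Y A d \<le> Z X \<pi> p Y" unfolding Zdelta_def Z_def
    by (rule sum_mono2) (use assms nn in auto)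
qed

lemma Qp_nonneg: "0 \<le> p \<Longrightarrow> p \<le> 1 \<Longrightarrow> 0 \<le> Qp X p V"
  unfolding Qp_def by simp

lemma sum_Qp: "finite X \<Longrightarrow> (\<Sum>V\<in>Pow X. Qp X p V) = 1"
  unfolding Qp_def by (simp add: binom_subsets)

theorem lemma4:
  fixes X :: "'a set" and \<pi> :: "'a set \<Rightarrow> real" and R p \<delta> :: real
  assumes "finite X"
    and "R > 1"
    and "0 < p" and "p \<le> 1"
    and "prob_on_subsets X \<pi>"
    and "spread X R \<pi>"
    and "\<delta> = (p * R) powr (- 1 / 3)"
    and "planted_exp X \<pi> p (\<lambda>A Y. Zdelta X \<pi> p Y A \<delta>) \<le> 6 * \<delta>\<^sup>2"
  shows "planted_exp X \<pi> p (\<lambda>A Y. Zdelta X \<pi> p Y A \<delta> / Z X \<pi> p Y) \<le> 6 * \<delta>"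
proof -
  have dpos: "\<delta> > 0" using assms by simp
  have pi0: "\<And>A. 0 \<le> \<pi> A" using assms(5) unfolding prob_on_subsets_def by simp
  define b where "b = (\<lambda>(A::'a set) Y. 1 / Z X \<pi> p Y)"
  have pw: "Zdelta X \<pi> p Y A \<delta> / Z X \<pi> p Y \<le> Zdelta X \<pi> p Y A \<delta> / (2 * \<delta>) + \<delta> / 2 * b A Y" for A Y
  proof -
    let ?a = "Zdelta X \<pi> p Y A \<delta>" and ?z = "Z X \<pi> p Y"
    have a0: "0 \<le> ?a" and az: "?a \<le> ?z" using Zdelta_le_Z assms by blast+
    show ?thesis
    proof (cases "?z = 0")
      case True then show ?thesis using a0 az b_def by simp
    next
      case False
      then have zp: "?z > 0" using a0 az by simp
      have "2 * \<delta> * ?a \<le> ?a * ?z + \<delta>^2"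
      proof -
        have "2 * \<delta> * ?a \<le> ?a^2 + \<delta>^2" using sum_squares_ge_zero[of "?a - \<delta>" 0]
          by (simp add: power2_eq_square algebra_simps)
        also have "?a^2 \<le> ?a * ?z" using a0 az by (simp add: power2_eq_square mult_left_mono)
        finally show ?thesis by simp
      qed
      then have "?a / ?z \<le> (?a * ?z + \<delta>^2) / (2 * \<delta> * ?z)"
        using zp dpos by (simp add: field_simps)
      also have "\<dots> = ?a / (2 * \<delta>) + \<delta> / 2 * b A Y"
        using zp dpos unfolding b_def by (simp add: field_simps power2_eq_square)
      finally show ?thesis .
    qed
  qed
  have Eb: "planted_exp X \<pi> p b \<le> 1"
  proof -
    have "planted_exp X \<pi> p b = (\<Sum>A\<in>Pow X. \<pi> A * (\<Sum>V\<in>Pow X. Qp X p V * (1 / Z X \<pi> p (A \<union> V))))"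
      unfolding planted_exp_def b_def by (simp add: sum_distrib_left mult.assoc)
    also have "\<dots> = (\<Sum>A\<in>Pow X. \<pi> A * (\<Sum>y\<in>Pow X. (if A \<subseteq> y then 1 else 0) * (Qp X p y * p powr (- real (card A))) * (1 / Z X \<pi> p y)))"
      proof (rule sum.cong)
      fix A assume "A \<in> Pow X"
      then show "\<pi> A * (\<Sum>V\<in>Pow X. Qp X p V * (1 / Z X \<pi> p (A \<union> V))) = \<pi> A * (\<Sum>y\<in>Pow X. (if A \<subseteq> y then 1 else 0) * (Qp X p y * p powr (- real (card A))) * (1 / Z X \<pi> p y))"
        using planted_id[OF assms(1) _ assms(3), of A "\<lambda>Y. 1 / Z X \<pi> p Y"] by simp
    qed simp
    also have "\<dots> = (\<Sum>y\<in>Pow X. \<Sum>A\<in>Pow X. Qp X p y / Z X \<pi> p y * (\<pi> A * (if A \<subseteq> y then 1 else 0) * p powr (- real (card A))))"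
      by (subst sum.swap) (simp add: sum_distrib_left mult_ac)
    also have "\<dots> = (\<Sum>y\<in>Pow X. Qp X p y / Z X \<pi> p y * Z X \<pi> p y)"
      unfolding Z_def by (simp add: sum_distrib_left)
    also have "\<dots> \<le> (\<Sum>y\<in>Pow X. Qp X p y)"
      by (rule sum_mono) (use Qp_nonneg[of p X, OF less_imp_le[OF assms(3)] assms(4)] in auto)
    also have "\<dots> = 1" using sum_Qp assms by blast
    finally show ?thesis .
  qed
  have "planted_exp X \<pi> p (\<lambda>A Y. Zdelta X \<pi> p Y A \<delta> / Z X \<pi> p Y)
      \<le> planted_exp X \<pi> p (\<lambda>A Y. Zdelta X \<pi> p Y A \<delta> / (2 * \<delta>) + \<delta> / 2 * b A Y)"
    unfolding planted_exp_def
    by (intro sum_mono mult_left_mono pw mult_nonneg_nonneg pi0 Qp_nonneg) (use assms in auto)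
  also have "\<dots> = planted_exp X \<pi> p (\<lambda>A Y. Zdelta X \<pi> p Y A \<delta>) / (2 * \<delta>) + \<delta> / 2 * planted_exp X \<pi> p b"
    unfolding planted_exp_def by (simp add: sum_divide_distrib sum_distrib_left sum.distrib algebra_simps)
  also have "\<dots> \<le> 6 * \<delta>\<^sup>2 / (2 * \<delta>) + \<delta> / 2 * 1"
    using assms(8) Eb dpos by (intro add_mono divide_right_mono mult_left_mono) auto
  also have "\<dots> \<le> 6 * \<delta>" using dpos by (simp add: power2_eq_square)
  finally show ?thesis .
qed

end
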